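(* Let $D$ be a locally semicomplete digraph such that $S(D)$ is chordal and $D$ contains neither an induced directed cycle consisting of non-symmetric arcs nor any of the digraphs $F_a, F_b, F_c, F_d$ (described in the context) as an induced subdigraph. Suppose $(u,v,w)$ is a violating triple. Then: (1) if $uv$ is a non-symmetric arc, there exists a di-simplicial vertex $u'$ of $S(D)$ (possibly $u'=u$) such that $(u',v,w)$ is a violating triple and $u'v$ is a non-symmetric arc; (2) if $vw$ is a non-symmetric arc, there exists a di-simplicial vertex $w'$ of $S(D)$ (possibly $w'=w$) such that $(u,v,w')$ is a violating triple and $vw'$ is a non-symmetric arc.
   Context: Digraphs are finite, have no loops and no multiple arcs, but may contain digons; an arc lying in a digon is called symmetric, otherwise non-symmetric. $N^-(v)$ / $N^+(v)$ denote the sets of in-/out-neighbours of $v$. A vertex $v$ is di-simplicial if for every $u \in N^-(v)$ and $w \in N^+(v)$ with $u \neq w$, $uw$ is an arc. A digraph is chordal if every induced subdigraph contains a di-simplicial vertex. $S(D)$ is the spanning subdigraph of $D$ consisting of all symmetric arcs of $D$. A digraph is semicomplete if between any two distinct vertices there is at least one arc; $D$ is locally semicomplete if for every vertex $v$, both $N^-(v)$ and $N^+(v)$ induce semicomplete subdigraphs. A directed cycle $v_1\dots v_kv_1$ is induced if there is no arc between $v_i,v_j$ whenever $|i-j|\notin\{1,k-1\}$. A violating triple is an ordered triple $(u,v,w)$ of vertices where $v$ is a di-simplicial vertex of $S(D)$, $u \in N^-(v)$, $w \in N^+(v)$, $u \neq w$, and $uw$ is not an arc of $D$. The digraphs $F_a,F_b,F_c$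 have vertex set $\{1,2,3,4\}$ with symmetric arcs $1\leftrightarrow 3$ and $2 \leftrightarrow 4$, plus: $F_a$: non-symmetric arcs $1\to2$, $2\to3$, $4\to1$ and symmetric arc $3\leftrightarrow4$; $F_b$: non-symmetric arcs $1\to2$, $2\to3$, $3\to4$, $4\to1$; $F_c$: non-symmetric arcs $1\to2$, $2\to3$, $4\to3$, $4\to1$. $F_d$ is the directed 3-cycle $1\to2\to3\to1$ with all arcs non-symmetric. *)

theory Defs
  imports Main
begin

definition digraph :: "'a set \<Rightarrow> ('a \<times> 'a) set \<Rightarrow> bool" where
  "digraph V A \<longleftrightarrow> finite V \<and> A \<subseteq> V \<times> V \<and> (\<forall>v. (v, v) \<notin> A)"

definition in_nbrs :: "('a \<times> 'a) set \<Rightarrow> 'a \<Rightarrow> 'a set" where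
  "in_nbrs A v = {u. (u, v) \<in> A}"

definition out_nbrs :: "('a \<times> 'a) set \<Rightarrow> 'a \<Rightarrow> 'a set" where
  "out_nbrs A v = {w. (v, w) \<in> A}"

definition symmetric_arc :: "('a \<times> 'a) set \<Rightarrow> 'a \<Rightarrow> 'a \<Rightarrow> bool" where
  "symmetric_arc A x y \<longleftrightarrow> (x, y) \<in> A \<and> (y, x) \<in> A"

definition nonsymmetric_arc :: "('a \<times> 'a) set \<Rightarrow> 'a \<Rightarrow> 'a \<Rightarrow> bool" where
  "nonsymmetric_arc A x y \<longleftrightarrow> (x, y) \<in> A \<and> (y, x) \<notin> A"

text \<open>Arc set of S(D) (same vertex set as D).\<close>
definition sym_part :: "('a \<times> 'a) set \<Rightarrow> ('a \<times> 'a) set" where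
  "sym_part A = {(x, y). (x, y) \<in> A \<and> (y, x) \<in> A}"

definition di_simplicial :: "'a set \<Rightarrow> ('a \<times> 'a) set \<Rightarrow> 'a \<Rightarrow> bool" where
  "di_simplicial V A v \<longleftrightarrow> v \<in> V \<and>
     (\<forall>u \<in> in_nbrs A v. \<forall>w \<in> out_nbrs A v. u \<noteq> w \<longrightarrow> (u, w) \<in> A)"

definition chordal :: "'a set \<Rightarrow> ('a \<times> 'a) set \<Rightarrow> bool" where
  "chordal V A \<longleftrightarrow> (\<forall>X. X \<subseteq> V \<and> X \<noteq> {} \<longrightarrow> (\<exists>v. di_simplicial X (A \<inter> (X \<times> X)) v))"

definition semicomplete :: "'a set \<Rightarrow> ('a \<times> 'a) set \<Rightarrow> bool" where
  "semicomplete X A \<longleftrightarrow> (\<forall>x \<in> X. \<forall>y \<in> X. x \<noteq> y \<longrightarrow> (x, y) \<in> A \<or> (y, x) \<in> A)"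

definition locally_semicomplete :: "'a set \<Rightarrow> ('a \<times> 'a) set \<Rightarrow> bool" where
  "locally_semicomplete V A \<longleftrightarrow>
     (\<forall>v \<in> V. semicomplete (in_nbrs A v) A \<and> semicomplete (out_nbrs A v) A)"

definition induced_nonsym_cycle :: "'a set \<Rightarrow> ('a \<times> 'a) set \<Rightarrow> 'a list \<Rightarrow> bool" where
  "induced_nonsym_cycle V A vs \<longleftrightarrow>
     (let k = length vs in
       k \<ge> 2 \<and> distinct vs \<and> set vs \<subseteq> V \<and>
       (\<forall>i < k. nonsymmetric_arc A (vs ! i) (vs ! ((i + 1) mod k))) \<and>
       (\<forall>i < k. \<forall>j < k. i \<noteq> j \<and> \<not> (i + 1 = j \<or> j + 1 = i \<or> i + (k - 1) = j \<or> j + (k - 1) = i)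
            \<longrightarrow> (vs ! i, vs ! j) \<notin> A))"

definition has_induced :: "'a set \<Rightarrow> ('a \<times> 'a) set \<Rightarrow> nat \<Rightarrow> (nat \<times> nat) set \<Rightarrow> bool" where
  "has_induced V A n H \<longleftrightarrow> (\<exists>f. inj_on f {1..n} \<and> f ` {1..n} \<subseteq> V \<and>
     (\<forall>i \<in> {1..n}. \<forall>j \<in> {1..n}. (f i, f j) \<in> A \<longleftrightarrow> (i, j) \<in> H))"

definition F_a :: "(nat \<times> nat) set" where
  "F_a = {(1,3),(3,1),(2,4),(4,2),(1,2),(2,3),(4,1),(3,4),(4,3)}"

definition F_b :: "(nat \<times> nat) set" where
  "F_b = {(1,3),(3,1),(2,4),(4,2),(1,2),(2,3),(3,4),(4,1)}"

definition F_c :: "(nat \<times> nat) set" where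
  "F_c = {(1,3),(3,1),(2,4),(4,2),(1,2),(2,3),(4,3),(4,1)}"

definition F_d :: "(nat \<times> nat) set" where
  "F_d = {(1,2),(2,3),(3,1)}"

definition violating_triple :: "'a set \<Rightarrow> ('a \<times> 'a) set \<Rightarrow> 'a \<Rightarrow> 'a \<Rightarrow> 'a \<Rightarrow> bool" where
  "violating_triple V A u v w \<longleftrightarrow>
     di_simplicial V (sym_part A) v \<and> u \<in> in_nbrs A v \<and> w \<in> out_nbrs A v \<and>
     u \<noteq> w \<and> (u, w) \<notin> A"

end

theory Submission imports Defs begin

lemma has_induced4I:
  assumes "distinct [a,b,c,d]" "{a,b,c,d} \<subseteq> V"
   "\<And>i j. i \<in> {1,2,3,4} \<Longrightarrow> j \<in> {1,2,3,4} \<Longrightarrow> (([a,b,c,d]!(i-1), [a,b,c,d]!(j-1)) \<in> A) = ((i,j) \<in> H)"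
  shows "has_induced V A 4 H"
proof -
  have e: "{1..4::nat} = {1,2,3,4}" by auto
  show ?thesis unfolding has_induced_def e
    apply (rule exI[of _ "\<lambda>i. [a,b,c,d]!(i-1)"])
    apply (intro conjI)
    subgoal using assms(1) by (auto simp: inj_on_def)
    subgoal using assms(2) by simp
    subgoal using assms(3) by blast
    done
qed

lemma has_induced3I:
  assumes "distinct [a,b,c]" "{a,b,c} \<subseteq> V"
   "\<And>i j. i \<in> {1,2,3} \<Longrightarrow> j \<in> {1,2,3} \<Longrightarrow> (([a,b,c]!(i-1), [a,b,c]!(j-1)) \<in> A) = ((i,j) \<in> H)"
  shows "has_induced V A 3 H"
proof -
  have e: "{1..3::nat} = {1,2,3}" by auto
  show ?thesis unfolding has_induced_def e
    apply (rule exI[of _ "\<lambda>i. [a,b,c]!(i-1)"])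
    apply (intro conjI)
    subgoal using assms(1) by (auto simp: inj_on_def)
    subgoal using assms(2) by simp
    subgoal using assms(3) by blast
    done
qed

lemma noFd:
  assumes "digraph V A" "\<not> has_induced V A 3 F_d" "a \<in> V" "b \<in> V" "c \<in> V"
    "(a,b) \<in> A" "(b,a) \<notin> A" "(b,c) \<in> A" "(c,b) \<notin> A" "(c,a) \<in> A" "(a,c) \<notin> A"
  shows False
proof -
  have nl: "\<And>x. (x,x) \<notin> A" using assms(1) by (auto simp: digraph_def)
  have dist: "distinct [a,b,c]" using assms(6-) nl by auto
  have "has_induced V A 3 F_d"
    apply (rule has_induced3I[of a b c])
    subgoal using assms(6-) nl by auto
    subgoal using assms(3-5) by simp
    subgoal for i j using assms(6-) nl dist by (simp add: F_d_def) (elim disjE; simp)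
    done
  then show False using assms(2) by simp
qed

lemma noFb:
  assumes "digraph V A" "\<not> has_induced V A 4 F_b" "a \<in> V" "b \<in> V" "c \<in> V" "d \<in> V"
    "(a,b) \<in> A" "(b,a) \<notin> A" "(b,c) \<in> A" "(c,b) \<notin> A" "(c,d) \<in> A" "(d,c) \<notin> A"
    "(d,a) \<in> A" "(a,d) \<notin> A" "(a,c) \<in> A" "(c,a) \<in> A" "(b,d) \<in> A" "(d,b) \<in> A"
  shows False
proof -
  have nl: "\<And>x. (x,x) \<notin> A" using assms(1) by (auto simp: digraph_def)
  have dist: "distinct [a,b,c,d]" using assms(7-) nl by auto
  have "has_induced V A 4 F_b"
    apply (rule has_induced4I[of a b c d])
    subgoal using assms(7-) nl by auto
    subgoal using assms(3-6) by simp
    subgoal for i j using assms(7-) nl dist by (simp add: F_b_def) (elim disjE; simp)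
    done
  then show False using assms(2) by simp
qed

lemma noFc:
  assumes "digraph V A" "\<not> has_induced V A 4 F_c" "a \<in> V" "b \<in> V" "c \<in> V" "d \<in> V"
    "(a,b) \<in> A" "(b,a) \<notin> A" "(b,c) \<in> A" "(c,b) \<notin> A" "(d,c) \<in> A" "(c,d) \<notin> A"
    "(d,a) \<in> A" "(a,d) \<notin> A" "(a,c) \<in> A" "(c,a) \<in> A" "(b,d) \<in> A" "(d,b) \<in> A"
  shows False
proof -
  have nl: "\<And>x. (x,x) \<notin> A" using assms(1) by (auto simp: digraph_def)
  have dist: "distinct [a,b,c,d]" using assms(7-) nl by auto
  have "has_induced V A 4 F_c"
    apply (rule has_induced4I[of a b c d])
    subgoal using assms(7-) nl by auto
    subgoal using assms(3-6) by simp
    subgoal for i j using assms(7-) nl dist by (simp add: F_c_def) (elim disjE; simp)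
    done
  then show False using assms(2) by simp
qed

lemma sym_part_iff[simp]: "(a,b) \<in> sym_part A \<longleftrightarrow> (a,b) \<in> A \<and> (b,a) \<in> A"
  by (simp add: sym_part_def)

definition simpl :: "('a \<times> 'a) set \<Rightarrow> 'a set \<Rightarrow> 'a \<Rightarrow> bool" where
  "simpl E W a \<longleftrightarrow> a \<in> W \<and> (\<forall>p\<in>W. \<forall>q\<in>W. (a,p) \<in> E \<longrightarrow> (a,q) \<in> E \<longrightarrow> p \<noteq> q \<longrightarrow> (p,q) \<in> E)"

lemma hered:
  assumes "chordal V E" "sym E" "W \<subseteq> V" "W \<noteq> {}"
  shows "\<exists>a. simpl E W a"
proof -
  obtain a where a: "di_simplicial W (E \<inter> (W \<times> W)) a"
    using assms unfolding chordal_def by blast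
  have "simpl E W a"
    using a assms(2) unfolding simpl_def di_simplicial_def in_nbrs_def out_nbrs_def
    by (auto dest: symD)
  then show ?thesis by blast
qed

lemma simp_outside_clique:
  assumes "finite W" "\<forall>W'\<subseteq>W. W' \<noteq> {} \<longrightarrow> (\<exists>a. simpl E W' a)" "sym E"
    "\<forall>p\<in>K. \<forall>q\<in>K. p \<noteq> q \<longrightarrow> (p,q) \<in> E" "\<not> W \<subseteq> K"
  shows "\<exists>a\<in>W-K. simpl E W a"
  using assms
proof (induction W arbitrary: K rule: finite_psubset_induct)
  case (psubset W)
  have "W \<noteq> {}" using psubset.prems(4) by blast
  then obtain z where z: "simpl E W z" using psubset.prems(1) by blast
  show ?case
  proof (cases "z \<in> K")
    case False with z show ?thesis by (auto simp: simpl_def)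
  next
    case zK: True
    show ?thesis
    proof (cases "\<forall>p\<in>W. p = z \<or> (z,p) \<in> E")
      case True
      obtain p where p: "p \<in> W" "p \<notin> K" using psubset.prems(4) by blast
      have "simpl E W p"
        unfolding simpl_def
      proof (intro conjI ballI impI)
        fix q r assume q: "q \<in> W" "r \<in> W" "(p,q) \<in> E" "(p,r) \<in> E" "q \<noteq> r"
        show "(q,r) \<in> E"
        proof (cases "q = z")
          case True then show ?thesis using q True \<open>\<forall>p\<in>W. p = z \<or> (z,p) \<in> E\<close> by auto
        next
          case False
          show ?thesis
          proof (cases "r = z")
            case True then show ?thesis using q False \<open>\<forall>p\<in>W. p = z \<or> (z,p) \<in> E\<close> psubset.prems(2)
              by (metis symD)
          next
            case False
            then show ?thesis using q \<open>q \<noteq> z\<close> z \<open>\<forall>p\<in>W. p = z \<or> (z,p) \<in> E\<close> unfolding simpl_def by blast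
          qed
        qed
      qed (use p in auto)
      then show ?thesis using p by blast
    next
      case False
      then obtain p where p: "p \<in> W" "p \<noteq> z" "(z,p) \<notin> E" by blast
      define W' where "W' = W - {z}"
      define K' where "K' = {p\<in>W'. (z,p) \<in> E}"
      have zW: "z \<in> W" using z by (simp add: simpl_def)
      have h1: "W' \<subset> W" using zW W'_def by blast
      have h2: "\<forall>W''\<subseteq>W'. W'' \<noteq> {} \<longrightarrow> (\<exists>a. simpl E W'' a)" using psubset.prems(1) W'_def by blast
      have h3: "\<forall>p\<in>K'. \<forall>q\<in>K'. p \<noteq> q \<longrightarrow> (p,q) \<in> E" using z unfolding K'_def W'_def simpl_def by blast
      have h4: "\<not> W' \<subseteq> K'" using p unfolding K'_def W'_def by blast
      obtain a where a: "a \<in> W' - K'" "simpl E W' a"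
        using psubset.IH[OF h1 h2 psubset.prems(2) h3 h4] by blast
      have az: "a \<noteq> z" "(z,a) \<notin> E" using a(1) unfolding K'_def W'_def by auto
      have za: "(a,z) \<notin> E" using az psubset.prems(2) by (metis symD)
      have "simpl E W a" using a(2) za unfolding simpl_def W'_def by blast
      moreover have "a \<notin> K"
      proof
        assume "a \<in> K"
        then have "(z,a) \<in> E" using zK az(1) psubset.prems(3) by auto
        then show False using az(2) by blast
      qed
      ultimately show ?thesis using a(1) W'_def by blast
    qed
  qed
qed

lemma simp_nonadj:
  assumes "finite W" "\<forall>W'\<subseteq>W. W' \<noteq> {} \<longrightarrow> (\<exists>a. simpl E W' a)" "sym E" "w \<in> W"
    "\<exists>p\<in>W. p \<noteq> w \<and> (w,p) \<notin> E"
  shows "\<exists>a\<in>W. a \<noteq> w \<and> (w,a) \<notin> E \<and> simpl E W a"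
  using assms
proof (induction W rule: finite_psubset_induct)
  case (psubset W)
  have "W \<noteq> {}" using psubset.prems(3) by blast
  then obtain z where z: "simpl E W z" using psubset.prems(1) by blast
  have zW: "z \<in> W" using z by (simp add: simpl_def)
  consider "z \<noteq> w \<and> (w,z) \<notin> E" | "z = w" | "z \<noteq> w \<and> (w,z) \<in> E" by blast
  then show ?case
  proof cases
    case 1 then show ?thesis using z zW by blast
  next
    case 2
    define K where "K = {p\<in>W. p = w \<or> (w,p) \<in> E}"
    have "\<forall>p\<in>K. \<forall>q\<in>K. p \<noteq> q \<longrightarrow> (p,q) \<in> E"
      using z 2 psubset.prems(2) unfolding K_def simpl_def by (metis (mono_tags, lifting) mem_Collect_eq symD)
    moreover have "\<not> W \<subseteq> K" using psubset.prems(4) unfolding K_def by blast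
    ultimately have "\<exists>a\<in>W - K. simpl E W a"
      by (rule simp_outside_clique[OF psubset.hyps(1) psubset.prems(1,2)])
    then obtain a where "a \<in> W - K" "simpl E W a" by blast
    then show ?thesis unfolding K_def by blast
  next
    case 3
    define W' where "W' = W - {z}"
    have h1: "W' \<subset> W" using zW W'_def by blast
    have h2: "\<forall>W''\<subseteq>W'. W'' \<noteq> {} \<longrightarrow> (\<exists>a. simpl E W'' a)" using psubset.prems(1) W'_def by blast
    have h3: "w \<in> W'" using 3 psubset.prems(3) W'_def by blast
    have h4: "\<exists>p\<in>W'. p \<noteq> w \<and> (w,p) \<notin> E" using psubset.prems(4) 3 W'_def by blast
    obtain a where a: "a \<in> W'" "a \<noteq> w" "(w,a) \<notin> E" "simpl E W' a"
      using psubset.IH[OF h1 h2 psubset.prems(2) h3 h4] by blast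
    have "(a,z) \<notin> E"
    proof
      assume "(a,z) \<in> E"
      then have "(z,a) \<in> E" using psubset.prems(2) by (metis symD)
      moreover have "(z,w) \<in> E" using 3 psubset.prems(2) by (metis symD)
      ultimately have "(w,a) \<in> E" using z a(2) psubset.prems(3) unfolding simpl_def W'_def
        using a(1) W'_def by blast
      then show False using a(3) by blast
    qed
    then have "simpl E W a" using a(4) unfolding simpl_def W'_def by blast
    then show ?thesis using a W'_def by blast
  qed
qed


lemma lsc_out:
  assumes "locally_semicomplete V A" "x \<in> V" "(x,a) \<in> A" "(x,b) \<in> A" "a \<noteq> b"
  shows "(a,b) \<in> A \<or> (b,a) \<in> A"
proof -
  have "semicomplete (out_nbrs A x) A" using assms(1,2) unfolding locally_semicomplete_def by blast
  moreover have "a \<in> out_nbrs A x" "b \<in> out_nbrs A x" using assms(3,4) by (simp_all add: out_nbrs_def)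
  ultimately show ?thesis using assms(5) unfolding semicomplete_def by blast
qed

lemma lsc_in:
  assumes "locally_semicomplete V A" "x \<in> V" "(a,x) \<in> A" "(b,x) \<in> A" "a \<noteq> b"
  shows "(a,b) \<in> A \<or> (b,a) \<in> A"
proof -
  have "semicomplete (in_nbrs A x) A" using assms(1,2) unfolding locally_semicomplete_def by blast
  moreover have "a \<in> in_nbrs A x" "b \<in> in_nbrs A x" using assms(3,4) by (simp_all add: in_nbrs_def)
  ultimately show ?thesis using assms(5) unfolding semicomplete_def by blast
qed

lemma vsimpD:
  assumes "di_simplicial V (sym_part A) v" "(v,p) \<in> A" "(p,v) \<in> A" "(v,q) \<in> A" "(q,v) \<in> A" "p \<noteq> q"
  shows "(p,q) \<in> A"
proof -
  have "p \<in> in_nbrs (sym_part A) v" "q \<in> out_nbrs (sym_part A) v"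
    using assms(2-5) by (simp_all add: in_nbrs_def out_nbrs_def)
  then have "(p,q) \<in> sym_part A" using assms(1,6) unfolding di_simplicial_def by blast
  then show ?thesis by simp
qed

lemma claim1:
  assumes dg: "digraph V A" and lsc: "locally_semicomplete V A"
    and nb: "\<not> has_induced V A 4 F_b" and nc: "\<not> has_induced V A 4 F_c" and nd: "\<not> has_induced V A 3 F_d"
    and vs: "di_simplicial V (sym_part A) v"
    and h: "(x,v) \<in> A" "(v,x) \<notin> A" "(v,w) \<in> A" "(x,w) \<notin> A" "(x,y) \<in> A" "(y,x) \<in> A"
  shows "((y,v) \<in> A \<and> (v,y) \<notin> A \<and> (y,w) \<notin> A) \<or> ((y,w) \<in> A \<and> (w,y) \<in> A)"
proof -
  have AV: "A \<subseteq> V \<times> V" using dg by (simp add: digraph_def)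
  have V: "x \<in> V" "y \<in> V" "v \<in> V" "w \<in> V" using h AV by auto
  have yv: "(y,v) \<in> A \<or> (v,y) \<in> A" using lsc_out[OF lsc V(1) h(5) h(1)] h by auto
  show ?thesis
  proof (rule ccontr)
    assume ng: "\<not> ?thesis"
    have wv_if: "(w,v) \<in> A" if "(w,x) \<in> A"
    proof (rule ccontr)
      assume "(w,v) \<notin> A"
      note this_ = this
        show False by (rule noFd[OF dg nd V(1) V(3) V(4)]) (use h that this_ in simp_all)
    qed
    consider (a) "(y,w) \<in> A" "(w,y) \<notin> A" | (b) "(w,y) \<in> A" "(y,w) \<notin> A" | (c) "(y,w) \<notin> A" "(w,y) \<notin> A"
      using ng by blast
    then show False
    proof cases
      case a
      have wx: "(w,x) \<in> A" using lsc_out[OF lsc V(2) h(6) a(1)] h by auto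
      have wv: "(w,v) \<in> A" using wv_if wx by blast
      show False
      proof (cases "(v,y) \<in> A")
        case True
        have "(y,v) \<notin> A" using vsimpD[OF vs, of w y] True h wv a by blast
        note this_ = this
        show False by (rule noFb[OF dg nb V(1) V(3) V(2) V(4)]) (use h wv wx a True this_ in simp_all)
      next
        case False
        note this_ = this
        show False by (rule noFc[OF dg nc V(4) V(1) V(3) V(2)]) (use h wv wx a yv this_ in simp_all)
      qed
    next
      case b
      have wx: "(w,x) \<in> A" using lsc_in[OF lsc V(2) h(5) b(1)] h by auto
      have wv: "(w,v) \<in> A" using wv_if wx by blast
      show False
      proof (cases "(v,y) \<in> A")
        case True
        have "(y,v) \<notin> A" using vsimpD[OF vs, of y w] True h wv b by blast
        note this_ = this
        show False by (rule noFc[OF dg nc V(1) V(3) V(2) V(4)]) (use h wv wx b True this_ in simp_all)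
      next
        case False
        then show False using ng yv b by blast
      qed
    next
      case c
      have "(v,y) \<notin> A"
      proof
        assume "(v,y) \<in> A"
        then show False using lsc_out[OF lsc V(3) _ h(3), of y] c h by auto
      qed
      then show False using ng yv c by blast
    qed
  qed
qed

lemma claim2:
  assumes dg: "digraph V A" and lsc: "locally_semicomplete V A"
    and nb: "\<not> has_induced V A 4 F_b" and nc: "\<not> has_induced V A 4 F_c" and nd: "\<not> has_induced V A 3 F_d"
    and vs: "di_simplicial V (sym_part A) v"
    and h: "(v,z) \<in> A" "(z,v) \<notin> A" "(u,v) \<in> A" "(u,z) \<notin> A" "(z,y) \<in> A" "(y,z) \<in> A"
  shows "((v,y) \<in> A \<and> (y,v) \<notin> A \<and> (u,y) \<notin> A) \<or> ((y,u) \<in> A \<and> (u,y) \<in> A)"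
proof -
  have AV: "A \<subseteq> V \<times> V" using dg by (simp add: digraph_def)
  have V: "z \<in> V" "y \<in> V" "v \<in> V" "u \<in> V" using h AV by auto
  have yv: "(y,v) \<in> A \<or> (v,y) \<in> A" using lsc_in[OF lsc V(1) h(6) h(1)] h by auto
  show ?thesis
  proof (rule ccontr)
    assume ng: "\<not> ?thesis"
    have vu_if: "(v,u) \<in> A" if "(z,u) \<in> A"
    proof (rule ccontr)
      assume "(v,u) \<notin> A"
      note this_ = this
        show False by (rule noFd[OF dg nd V(4) V(3) V(1)]) (use h that this_ in simp_all)
    qed
    consider (a) "(u,y) \<in> A" "(y,u) \<notin> A" | (b) "(y,u) \<in> A" "(u,y) \<notin> A" | (c) "(y,u) \<notin> A" "(u,y) \<notin> A"
      using ng by blast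
    then show False
    proof cases
      case a
      have zu: "(z,u) \<in> A" using lsc_in[OF lsc V(2) h(5) a(1)] h by auto
      have vu: "(v,u) \<in> A" using vu_if zu by blast
      show False
      proof (cases "(y,v) \<in> A")
        case True
        have "(v,y) \<notin> A" using vsimpD[OF vs, of y u] True h vu a by blast
        note this_ = this
        show False by (rule noFb[OF dg nb V(1) V(4) V(2) V(3)]) (use h vu zu a True this_ in simp_all)
      next
        case False
        note this_ = this
        show False by (rule noFc[OF dg nc V(1) V(4) V(2) V(3)]) (use h vu zu a yv this_ in simp_all)
      qed
    next
      case b
      have zu: "(z,u) \<in> A" using lsc_out[OF lsc V(2) h(6) b(1)] h by auto
      have vu: "(v,u) \<in> A" using vu_if zu by blast
      show False
      proof (cases "(y,v) \<in> A")
        case True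
        have "(v,y) \<notin> A" using vsimpD[OF vs, of u y] True h vu b by blast
        note this_ = this
        show False by (rule noFc[OF dg nc V(3) V(1) V(4) V(2)]) (use h vu zu b True this_ in simp_all)
      next
        case False
        then show False using ng yv b by blast
      qed
    next
      case c
      have "(y,v) \<notin> A"
      proof
        assume "(y,v) \<in> A"
        then show False using lsc_in[OF lsc V(3) _ h(3), of y] c h by auto
      qed
      then show False using ng yv c by blast
    qed
  qed
qed


lemma dsI:
  assumes "a \<in> W" "simpl (sym_part A) W a" "W \<subseteq> V"
    "\<And>p. (a,p) \<in> A \<Longrightarrow> (p,a) \<in> A \<Longrightarrow> p \<in> W"
  shows "di_simplicial V (sym_part A) a"
  unfolding di_simplicial_def
proof (intro conjI ballI impI)
  show "a \<in> V" using assms(1,3) by blast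
  fix p q assume p: "p \<in> in_nbrs (sym_part A) a" and q: "q \<in> out_nbrs (sym_part A) a" and pq: "p \<noteq> q"
  have pA: "(a,p) \<in> A" "(p,a) \<in> A" using p by (simp_all add: in_nbrs_def)
  have qA: "(a,q) \<in> A" "(q,a) \<in> A" using q by (simp_all add: out_nbrs_def)
  have W: "p \<in> W" "q \<in> W" using assms(4) pA qA by auto
  have E: "(a,p) \<in> sym_part A" "(a,q) \<in> sym_part A" using pA qA by simp_all
  show "(p,q) \<in> sym_part A" using assms(2) W E pq unfolding simpl_def by blast
qed

theorem lemma2p3:
  fixes V :: "'a set" and A :: "('a \<times> 'a) set" and u v w :: 'a
  assumes "digraph V A"
    and "locally_semicomplete V A"
    and "chordal V (sym_part A)"
    and "\<not> (\<exists>vs. induced_nonsym_cycle V A vs)"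
    and "\<not> has_induced V A 4 F_a" and "\<not> has_induced V A 4 F_b"
    and "\<not> has_induced V A 4 F_c" and "\<not> has_induced V A 3 F_d"
    and "violating_triple V A u v w"
  shows "(nonsymmetric_arc A u v \<longrightarrow>
            (\<exists>u'. di_simplicial V (sym_part A) u' \<and> violating_triple V A u' v w
                  \<and> nonsymmetric_arc A u' v))
       \<and> (nonsymmetric_arc A v w \<longrightarrow>
            (\<exists>w'. di_simplicial V (sym_part A) w' \<and> violating_triple V A u v w'
                  \<and> nonsymmetric_arc A v w'))"
proof -
  note dg = assms(1) and lsc = assms(2) and nb = assms(6) and nc = assms(7) and nd = assms(8)
  define E where "E = sym_part A"
  have AV: "A \<subseteq> V \<times> V" and fin: "finite V" using dg by (auto simp: digraph_def)
  have symE: "sym E" unfolding E_def by (auto intro: symI)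
  have hd: "\<forall>W'\<subseteq>W. W' \<noteq> {} \<longrightarrow> (\<exists>a. simpl E W' a)" if "W \<subseteq> V" for W
  proof (intro allI impI)
    fix W' assume "W' \<subseteq> W" "W' \<noteq> {}"
    then show "\<exists>a. simpl E W' a" using hered[OF assms(3)[folded E_def] symE, of W'] that by blast
  qed
  have vt: "di_simplicial V (sym_part A) v" "(u,v) \<in> A" "(v,w) \<in> A" "u \<noteq> w" "(u,w) \<notin> A"
    using assms(9) unfolding violating_triple_def in_nbrs_def out_nbrs_def by auto
  have uV: "u \<in> V" and vV: "v \<in> V" and wV: "w \<in> V" using vt AV by auto
  show ?thesis
  proof (intro conjI impI)
    assume ns: "nonsymmetric_arc A u v"
    define X where "X = {x\<in>V. (x,v) \<in> A \<and> (v,x) \<notin> A \<and> (x,w) \<notin> A \<and> x \<noteq> w}"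
    define W where "W = X \<union> {y\<in>V. y = w \<or> (w,y) \<in> E}"
    have WV: "W \<subseteq> V" unfolding W_def X_def by blast
    have uX: "u \<in> X" using ns vt uV unfolding X_def nonsymmetric_arc_def by auto
    have "u \<in> W" "u \<noteq> w" "(w,u) \<notin> E" using uX vt unfolding W_def E_def by auto
    then have ex: "\<exists>p\<in>W. p \<noteq> w \<and> (w,p) \<notin> E" by blast
    have wW: "w \<in> W" using wV unfolding W_def by auto
    obtain a where a: "a \<in> W" "a \<noteq> w" "(w,a) \<notin> E" "simpl E W a"
      using simp_nonadj[OF finite_subset[OF WV fin] hd[OF WV] symE wW ex] by blast
    have aX: "a \<in> X" using a unfolding W_def by blast
    have aX': "(a,v) \<in> A" "(v,a) \<notin> A" "(a,w) \<notin> A" "a \<noteq> w" "a \<in> V" using aX unfolding X_def by auto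
    have "di_simplicial V (sym_part A) a"
    proof (rule dsI[OF a(1) a(4)[unfolded E_def] WV])
      fix p assume p: "(a,p) \<in> A" "(p,a) \<in> A"
      have pV: "p \<in> V" using p AV by auto
      have pw: "p \<noteq> w" using p aX' by auto
      have c: "((p,v) \<in> A \<and> (v,p) \<notin> A \<and> (p,w) \<notin> A) \<or> ((p,w) \<in> A \<and> (w,p) \<in> A)"
        by (rule claim1[OF dg lsc nb nc nd vt(1) aX'(1) aX'(2) vt(3) aX'(3) p(1) p(2)])
      show "p \<in> W" using c pV pw unfolding W_def X_def E_def by auto
    qed
    moreover have "violating_triple V A a v w"
      unfolding violating_triple_def in_nbrs_def out_nbrs_def using vt aX' by simp
    moreover have "nonsymmetric_arc A a v" unfolding nonsymmetric_arc_def using aX' by simp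
    ultimately show "\<exists>u'. di_simplicial V (sym_part A) u' \<and> violating_triple V A u' v w \<and> nonsymmetric_arc A u' v"
      by blast
  next
    assume ns: "nonsymmetric_arc A v w"
    define X where "X = {z\<in>V. (v,z) \<in> A \<and> (z,v) \<notin> A \<and> (u,z) \<notin> A \<and> z \<noteq> u}"
    define W where "W = X \<union> {y\<in>V. y = u \<or> (u,y) \<in> E}"
    have WV: "W \<subseteq> V" unfolding W_def X_def by blast
    have wX: "w \<in> X" using ns vt wV unfolding X_def nonsymmetric_arc_def by auto
    have "w \<in> W" "w \<noteq> u" "(u,w) \<notin> E" using wX vt unfolding W_def E_def by auto
    then have ex: "\<exists>p\<in>W. p \<noteq> u \<and> (u,p) \<notin> E" by blast
    have uW: "u \<in> W" using uV unfolding W_def by auto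
    obtain a where a: "a \<in> W" "a \<noteq> u" "(u,a) \<notin> E" "simpl E W a"
      using simp_nonadj[OF finite_subset[OF WV fin] hd[OF WV] symE uW ex] by blast
    have aX: "a \<in> X" using a unfolding W_def by blast
    have aX': "(v,a) \<in> A" "(a,v) \<notin> A" "(u,a) \<notin> A" "a \<noteq> u" "a \<in> V" using aX unfolding X_def by auto
    have "di_simplicial V (sym_part A) a"
    proof (rule dsI[OF a(1) a(4)[unfolded E_def] WV])
      fix p assume p: "(a,p) \<in> A" "(p,a) \<in> A"
      have pV: "p \<in> V" using p AV by auto
      have pu: "p \<noteq> u" using p aX' by auto
      have c: "((v,p) \<in> A \<and> (p,v) \<notin> A \<and> (u,p) \<notin> A) \<or> ((p,u) \<in> A \<and> (u,p) \<in> A)"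
        by (rule claim2[OF dg lsc nb nc nd vt(1) aX'(1) aX'(2) vt(2) aX'(3) p(1) p(2)])
      show "p \<in> W" using c pV pu unfolding W_def X_def E_def by auto
    qed
    moreover have "violating_triple V A u v a"
      unfolding violating_triple_def in_nbrs_def out_nbrs_def using vt aX' by auto
    moreover have "nonsymmetric_arc A v a" unfolding nonsymmetric_arc_def using aX' by simp
    ultimately show "\<exists>w'. di_simplicial V (sym_part A) w' \<and> violating_triple V A u v w' \<and> nonsymmetric_arc A v w'"
      by blast
  qed
qed

end
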